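(* Let $X$ be a space with base point $*$ and $C$ a locally trivial $X$-groupoid with $\Omega_C=C_*^*$. Then $C$ is Hausdorff if and only if $X$ and $\Omega_C$ are Hausdorff.
   Context: $X$-groupoid: a space $C$ with continuous source/target $\alpha,\beta:C\to X$, continuous associative partial composition on $\{(c_1,c_2):\alpha(c_1)=\beta(c_2)\}$ with $\alpha(c_1c_2)=\alpha(c_2)$, $\beta(c_1c_2)=\beta(c_1)$, continuous units $i_x$ and continuous inversion $C_x^y\to C_y^x$, where $C_x=\alpha^{-1}(x)$, $C^y=\beta^{-1}(y)$, $C^y_x=C_x\cap C^y$. A $C$-contraction is a continuous $\rho:U_\rho\to C^*$, $U_\rho\subset X$ open, with $\alpha(\rho(x))=x$; $C$ is locally trivial if the $U_\rho$ cover $X$. *)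

theory Defs
  imports "HOL-Analysis.Analysis"
begin

definition X_groupoid ::
  "'x topology \<Rightarrow> 'c topology \<Rightarrow> ('c \<Rightarrow> 'x) \<Rightarrow> ('c \<Rightarrow> 'x)
   \<Rightarrow> ('c \<Rightarrow> 'c \<Rightarrow> 'c) \<Rightarrow> ('x \<Rightarrow> 'c) \<Rightarrow> ('c \<Rightarrow> 'c) \<Rightarrow> bool" where
  "X_groupoid X C \<alpha> \<beta> cmp i ginv \<longleftrightarrow>
     continuous_map C X \<alpha> \<and> continuous_map C X \<beta> \<and>
     continuous_map
       (subtopology (prod_topology C C)
          {(c1, c2). c1 \<in> topspace C \<and> c2 \<in> topspace C \<and> \<alpha> c1 = \<beta> c2})
       C (\<lambda>(c1, c2). cmp c1 c2) \<and>
     (\<forall>c1\<in>topspace C. \<forall>c2\<in>topspace C. \<alpha> c1 = \<beta> c2 \<longrightarrow>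
        \<alpha> (cmp c1 c2) = \<alpha> c2 \<and> \<beta> (cmp c1 c2) = \<beta> c1) \<and>
     (\<forall>c1\<in>topspace C. \<forall>c2\<in>topspace C. \<forall>c3\<in>topspace C.
        \<alpha> c1 = \<beta> c2 \<and> \<alpha> c2 = \<beta> c3 \<longrightarrow>
        cmp (cmp c1 c2) c3 = cmp c1 (cmp c2 c3)) \<and>
     continuous_map X C i \<and>
     (\<forall>x\<in>topspace X. \<alpha> (i x) = x \<and> \<beta> (i x) = x) \<and>
     (\<forall>c\<in>topspace C. cmp c (i (\<alpha> c)) = c \<and> cmp (i (\<beta> c)) c = c) \<and>
     continuous_map C C ginv \<and>
     (\<forall>c\<in>topspace C. \<alpha> (ginv c) = \<beta> c \<and> \<beta> (ginv c) = \<alpha> c \<and>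
        cmp c (ginv c) = i (\<beta> c) \<and> cmp (ginv c) c = i (\<alpha> c))"

definition C_contraction ::
  "'x topology \<Rightarrow> 'c topology \<Rightarrow> ('c \<Rightarrow> 'x) \<Rightarrow> ('c \<Rightarrow> 'x) \<Rightarrow> 'x
   \<Rightarrow> 'x set \<Rightarrow> ('x \<Rightarrow> 'c) \<Rightarrow> bool" where
  "C_contraction X C \<alpha> \<beta> base U \<rho> \<longleftrightarrow>
     openin X U \<and>
     continuous_map (subtopology X U)
       (subtopology C {c \<in> topspace C. \<beta> c = base}) \<rho> \<and>
     (\<forall>x\<in>U. \<alpha> (\<rho> x) = x)"

definition locally_trivial ::
  "'x topology \<Rightarrow> 'c topology \<Rightarrow> ('c \<Rightarrow> 'x) \<Rightarrow> ('c \<Rightarrow> 'x) \<Rightarrow> 'x \<Rightarrow> bool" where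
  "locally_trivial X C \<alpha> \<beta> base \<longleftrightarrow>
     (\<forall>x\<in>topspace X. \<exists>U \<rho>. C_contraction X C \<alpha> \<beta> base U \<rho> \<and> x \<in> U)"

definition vertex_space ::
  "'c topology \<Rightarrow> ('c \<Rightarrow> 'x) \<Rightarrow> ('c \<Rightarrow> 'x) \<Rightarrow> 'x \<Rightarrow> 'c topology" where
  "vertex_space C \<alpha> \<beta> base =
     subtopology C {c \<in> topspace C. \<alpha> c = base \<and> \<beta> c = base}"

end

theory Submission
  imports Defs
begin

lemma cmp_cont_lemma:
  assumes G: "X_groupoid X C \<alpha> \<beta> cmp i ginv"
    and f: "continuous_map Z C f" and g: "continuous_map Z C g"
    and eq: "\<And>z. z \<in> topspace Z \<Longrightarrow> \<alpha> (f z) = \<beta> (g z)"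
  shows "continuous_map Z C (\<lambda>z. cmp (f z) (g z))"
proof -
  let ?P = "{(c1, c2). c1 \<in> topspace C \<and> c2 \<in> topspace C \<and> \<alpha> c1 = \<beta> c2}"
  have m: "continuous_map (subtopology (prod_topology C C) ?P) C (\<lambda>(c1, c2). cmp c1 c2)"
    using G unfolding X_groupoid_def by blast
  have p: "continuous_map Z (subtopology (prod_topology C C) ?P) (\<lambda>z. (f z, g z))"
    unfolding continuous_map_in_subtopology
    using f g eq continuous_map_image_subset_topspace[OF f] continuous_map_image_subset_topspace[OF g]
    by (auto intro!: continuous_map_pairedI)
  from continuous_map_compose[OF p m] show ?thesis by (simp add: o_def)
qed

lemma sep_same:
  assumes G: "X_groupoid X C \<alpha> \<beta> cmp i ginv"
    and LT: "locally_trivial X C \<alpha> \<beta> base"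
    and HO: "Hausdorff_space (vertex_space C \<alpha> \<beta> base)"
    and c: "c \<in> topspace C" and d: "d \<in> topspace C" and cd: "c \<noteq> d"
    and a: "\<alpha> c = \<alpha> d" and b: "\<beta> c = \<beta> d"
  shows "\<exists>U V. openin C U \<and> openin C V \<and> c \<in> U \<and> d \<in> V \<and> disjnt U V"
proof -
  let ?Cb = "{c \<in> topspace C. \<beta> c = base}"
  let ?Om = "{c \<in> topspace C. \<alpha> c = base \<and> \<beta> c = base}"
  have ca: "continuous_map C X \<alpha>" and cb: "continuous_map C X \<beta>"
    and ci: "continuous_map C C ginv"
    using G unfolding X_groupoid_def by blast+
  have cmpT: "cmp c1 c2 \<in> topspace C" if "c1 \<in> topspace C" "c2 \<in> topspace C" "\<alpha> c1 = \<beta> c2" for c1 c2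
  proof -
    have "continuous_map (subtopology (prod_topology C C)
          {(c1, c2). c1 \<in> topspace C \<and> c2 \<in> topspace C \<and> \<alpha> c1 = \<beta> c2}) C (\<lambda>(c1, c2). cmp c1 c2)"
      using G unfolding X_groupoid_def by blast
    from continuous_map_image_subset_topspace[OF this] that show ?thesis by auto
  qed
  have cmpab: "\<alpha> (cmp c1 c2) = \<alpha> c2 \<and> \<beta> (cmp c1 c2) = \<beta> c1"
    if "c1 \<in> topspace C" "c2 \<in> topspace C" "\<alpha> c1 = \<beta> c2" for c1 c2
    using G that unfolding X_groupoid_def by blast
  have assoc: "cmp (cmp c1 c2) c3 = cmp c1 (cmp c2 c3)"
    if "c1 \<in> topspace C" "c2 \<in> topspace C" "c3 \<in> topspace C" "\<alpha> c1 = \<beta> c2" "\<alpha> c2 = \<beta> c3" for c1 c2 c3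
    using G that unfolding X_groupoid_def by blast
  have unit: "cmp c (i (\<alpha> c)) = c \<and> cmp (i (\<beta> c)) c = c" if "c \<in> topspace C" for c
    using G that unfolding X_groupoid_def by blast
  have inv: "\<alpha> (ginv c) = \<beta> c \<and> \<beta> (ginv c) = \<alpha> c \<and>
        cmp c (ginv c) = i (\<beta> c) \<and> cmp (ginv c) c = i (\<alpha> c)" if "c \<in> topspace C" for c
    using G that unfolding X_groupoid_def by blast
  have ginvT: "ginv c \<in> topspace C" if "c \<in> topspace C" for c
    using continuous_map_image_subset_topspace[OF ci] that by auto
  have xT: "\<alpha> c \<in> topspace X" "\<beta> c \<in> topspace X"
    using c continuous_map_image_subset_topspace[OF ca] continuous_map_image_subset_topspace[OF cb] by auto
  obtain U \<rho> where rU: "C_contraction X C \<alpha> \<beta> base U \<rho>" "\<alpha> c \<in> U"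
    using LT xT unfolding locally_trivial_def by blast
  obtain V \<sigma> where sV: "C_contraction X C \<alpha> \<beta> base V \<sigma>" "\<beta> c \<in> V"
    using LT xT unfolding locally_trivial_def by blast
  have oU: "openin X U" and crho: "continuous_map (subtopology X U) (subtopology C ?Cb) \<rho>"
    and arho: "\<forall>x\<in>U. \<alpha> (\<rho> x) = x"
    using rU unfolding C_contraction_def by blast+
  have oV: "openin X V" and csig: "continuous_map (subtopology X V) (subtopology C ?Cb) \<sigma>"
    and asig: "\<forall>x\<in>V. \<alpha> (\<sigma> x) = x"
    using sV unfolding C_contraction_def by blast+
  have UX: "U \<subseteq> topspace X" "V \<subseteq> topspace X" using oU oV openin_subset by auto
  have rhoT: "\<rho> x \<in> topspace C \<and> \<beta> (\<rho> x) = base \<and> \<alpha> (\<rho> x) = x" if "x \<in> U" for x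
    using continuous_map_image_subset_topspace[OF crho] that UX arho by (auto simp: image_subset_iff)
  have sigT: "\<sigma> x \<in> topspace C \<and> \<beta> (\<sigma> x) = base \<and> \<alpha> (\<sigma> x) = x" if "x \<in> V" for x
    using continuous_map_image_subset_topspace[OF csig] that UX asig by (auto simp: image_subset_iff)
  define W where "W = {c \<in> topspace C. \<alpha> c \<in> U \<and> \<beta> c \<in> V}"
  have oW: "openin C W"
  proof -
    have "openin C {c \<in> topspace C. \<alpha> c \<in> U}" by (rule openin_continuous_map_preimage[OF ca oU])
    moreover have "openin C {c \<in> topspace C. \<beta> c \<in> V}" by (rule openin_continuous_map_preimage[OF cb oV])
    ultimately have "openin C ({c \<in> topspace C. \<alpha> c \<in> U} \<inter> {c \<in> topspace C. \<beta> c \<in> V})" by blast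
    moreover have "{c \<in> topspace C. \<alpha> c \<in> U} \<inter> {c \<in> topspace C. \<beta> c \<in> V} = W" unfolding W_def by auto
    ultimately show ?thesis by simp
  qed
  have tW: "topspace (subtopology C W) = W" using oW openin_subset by (auto simp: topspace_subtopology)
  define f1 where "f1 = (\<lambda>c. ginv (\<rho> (\<alpha> c)))"
  define h where "h = (\<lambda>c. \<sigma> (\<beta> c))"
  define g where "g = (\<lambda>c. cmp c (f1 c))"
  define \<phi> where "\<phi> = (\<lambda>c. cmp (h c) (g c))"
  have caW: "continuous_map (subtopology C W) (subtopology X U) \<alpha>"
    unfolding continuous_map_in_subtopology using tW ca
    by (auto simp: W_def intro: continuous_map_from_subtopology)
  have cbW: "continuous_map (subtopology C W) (subtopology X V) \<beta>"
    unfolding continuous_map_in_subtopology using tW cb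
    by (auto simp: W_def intro: continuous_map_from_subtopology)
  have cf1: "continuous_map (subtopology C W) C f1"
  proof -
    have "continuous_map (subtopology C W) C (\<rho> \<circ> \<alpha>)"
      using continuous_map_compose[OF caW continuous_map_into_fulltopology[OF crho]] .
    from continuous_map_compose[OF this ci] show ?thesis by (simp add: f1_def o_def)
  qed
  have ch: "continuous_map (subtopology C W) C h"
    using continuous_map_compose[OF cbW continuous_map_into_fulltopology[OF csig]]
    by (simp add: h_def o_def)
  have pt: "f1 x \<in> topspace C \<and> \<alpha> (f1 x) = base \<and> \<beta> (f1 x) = \<alpha> x \<and>
            h x \<in> topspace C \<and> \<alpha> (h x) = \<beta> x \<and> \<beta> (h x) = base \<and>
            g x \<in> topspace C \<and> \<alpha> (g x) = base \<and> \<beta> (g x) = \<beta> x" if "x \<in> W" for x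
  proof -
    have xC: "x \<in> topspace C" "\<alpha> x \<in> U" "\<beta> x \<in> V" using that W_def by auto
    have 1: "f1 x \<in> topspace C \<and> \<alpha> (f1 x) = base \<and> \<beta> (f1 x) = \<alpha> x"
      using rhoT[OF xC(2)] inv ginvT unfolding f1_def by auto
    have 2: "h x \<in> topspace C \<and> \<alpha> (h x) = \<beta> x \<and> \<beta> (h x) = base"
      using sigT[OF xC(3)] unfolding h_def by auto
    show ?thesis using 1 2 xC cmpT[of x "f1 x"] cmpab[of x "f1 x"] unfolding g_def by auto
  qed
  have cg: "continuous_map (subtopology C W) C g"
    unfolding g_def
  proof (rule cmp_cont_lemma[OF G _ cf1, where f="\<lambda>c. c"])
    show "continuous_map (subtopology C W) C (\<lambda>c. c)"
      by (simp add: continuous_map_from_subtopology)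
    fix z assume "z \<in> topspace (subtopology C W)"
    then show "\<alpha> z = \<beta> (f1 z)" using pt tW by simp
  qed
  have cphi: "continuous_map (subtopology C W) C \<phi>"
    unfolding \<phi>_def
  proof (rule cmp_cont_lemma[OF G ch cg])
    fix z assume "z \<in> topspace (subtopology C W)"
    then show "\<alpha> (h z) = \<beta> (g z)" using pt tW by simp
  qed
  have phiO: "\<phi> x \<in> ?Om" if "x \<in> W" for x
    using pt[OF that] cmpT[of "h x" "g x"] cmpab[of "h x" "g x"] unfolding \<phi>_def by auto
  have cphiO: "continuous_map (subtopology C W) (vertex_space C \<alpha> \<beta> base) \<phi>"
    unfolding vertex_space_def continuous_map_in_subtopology using cphi phiO tW by auto
  have cW: "c \<in> W" and dW: "d \<in> W" using c d a b rU(2) sV(2) W_def by auto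
  have recover: "x = cmp (cmp (ginv (h x)) (\<phi> x)) (\<rho> (\<alpha> x))" if "x \<in> W" for x
  proof -
    note P = pt[OF that]
    have xC: "x \<in> topspace C" "\<alpha> x \<in> U" using that W_def by auto
    have hT: "h x \<in> topspace C" and gT: "g x \<in> topspace C" and fT: "f1 x \<in> topspace C"
      using P by blast+
    have hg: "\<alpha> (h x) = \<beta> (g x)" using P by simp
    have hi1: "ginv (h x) \<in> topspace C" by (rule ginvT[OF hT])
    have hi2: "\<alpha> (ginv (h x)) = \<beta> (h x)" "cmp (ginv (h x)) (h x) = i (\<alpha> (h x))"
      using inv[OF hT] by blast+
    have "cmp (ginv (h x)) (\<phi> x) = cmp (cmp (ginv (h x)) (h x)) (g x)"
      unfolding \<phi>_def by (rule sym[OF assoc[OF hi1 hT gT hi2(1) hg]])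
    also have "\<dots> = cmp (i (\<beta> (g x))) (g x)" by (simp only: hi2(2) hg)
    also have "\<dots> = g x" using unit[OF gT] by blast
    finally have e1: "cmp (ginv (h x)) (\<phi> x) = g x" .
    have rT: "\<rho> (\<alpha> x) \<in> topspace C" and rb: "\<beta> (\<rho> (\<alpha> x)) = base"
      using rhoT[OF xC(2)] by blast+
    have fa: "\<alpha> x = \<beta> (f1 x)" "\<alpha> (f1 x) = \<beta> (\<rho> (\<alpha> x))" using P rb by simp_all
    have "cmp (g x) (\<rho> (\<alpha> x)) = cmp x (cmp (f1 x) (\<rho> (\<alpha> x)))"
      unfolding g_def by (rule assoc[OF xC(1) fT rT fa])
    also have "cmp (f1 x) (\<rho> (\<alpha> x)) = i (\<alpha> (\<rho> (\<alpha> x)))"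
      unfolding f1_def using inv[OF rT] by blast
    also have "\<alpha> (\<rho> (\<alpha> x)) = \<alpha> x" using rhoT[OF xC(2)] by blast
    also have "cmp x (i (\<alpha> x)) = x" using unit[OF xC(1)] by blast
    finally have e2: "cmp (g x) (\<rho> (\<alpha> x)) = x" .
    show ?thesis by (simp only: e1 e2)
  qed
  have ne: "\<phi> c \<noteq> \<phi> d"
  proof
    assume pe: "\<phi> c = \<phi> d"
    have he: "h c = h d" unfolding h_def using b by simp
    have e: "cmp (cmp (ginv (h c)) (\<phi> c)) (\<rho> (\<alpha> c)) = cmp (cmp (ginv (h d)) (\<phi> d)) (\<rho> (\<alpha> d))"
      by (simp only: pe he a)
    have "c = d" by (rule trans[OF recover[OF cW] trans[OF e sym[OF recover[OF dW]]]])
    with cd show False by simp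
  qed
  have tO: "topspace (vertex_space C \<alpha> \<beta> base) = ?Om"
    unfolding vertex_space_def by (simp add: topspace_subtopology Int_absorb1)
  have pcO: "\<phi> c \<in> topspace (vertex_space C \<alpha> \<beta> base)" "\<phi> d \<in> topspace (vertex_space C \<alpha> \<beta> base)"
    using phiO[OF cW] phiO[OF dW] tO by simp_all
  obtain A B where AB: "openin (vertex_space C \<alpha> \<beta> base) A" "openin (vertex_space C \<alpha> \<beta> base) B"
    "\<phi> c \<in> A" "\<phi> d \<in> B" "disjnt A B"
    using HO ne pcO unfolding Hausdorff_space_def by metis
  define A' where "A' = {x \<in> topspace (subtopology C W). \<phi> x \<in> A}"
  define B' where "B' = {x \<in> topspace (subtopology C W). \<phi> x \<in> B}"
  have oA: "openin C A'" unfolding A'_def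
    by (rule openin_trans_full[OF openin_continuous_map_preimage[OF cphiO AB(1)] oW])
  have oB: "openin C B'" unfolding B'_def
    by (rule openin_trans_full[OF openin_continuous_map_preimage[OF cphiO AB(2)] oW])
  have cA: "c \<in> A'" unfolding A'_def tW using AB(3) cW by simp
  have dB: "d \<in> B'" unfolding B'_def tW using AB(4) dW by simp
  have dj: "disjnt A' B'" using AB(5) unfolding A'_def B'_def disjnt_def by blast
  show ?thesis using oA oB cA dB dj by blast
qed

theorem mainTheorem20:
  fixes X :: "'x topology" and C :: "'c topology"
    and \<alpha> \<beta> :: "'c \<Rightarrow> 'x" and cmp :: "'c \<Rightarrow> 'c \<Rightarrow> 'c"
    and i :: "'x \<Rightarrow> 'c" and ginv :: "'c \<Rightarrow> 'c" and base :: 'x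
  assumes "base \<in> topspace X"
    and "X_groupoid X C \<alpha> \<beta> cmp i ginv"
    and "locally_trivial X C \<alpha> \<beta> base"
  shows "Hausdorff_space C \<longleftrightarrow>
           Hausdorff_space X \<and> Hausdorff_space (vertex_space C \<alpha> \<beta> base)"
proof
  have ca: "continuous_map C X \<alpha>" and cb: "continuous_map C X \<beta>"
    and ci: "continuous_map X C i" and ai: "\<forall>x\<in>topspace X. \<alpha> (i x) = x"
    using assms(2) unfolding X_groupoid_def by blast+
  {
    assume H: "Hausdorff_space C"
    have "Hausdorff_space (vertex_space C \<alpha> \<beta> base)"
      unfolding vertex_space_def by (rule Hausdorff_space_subtopology[OF H])
    moreover have "Hausdorff_space X"
      unfolding Hausdorff_space_def
    proof (intro allI impI)
      fix x y assume xy: "x \<in> topspace X \<and> y \<in> topspace X \<and> x \<noteq> y"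
      then have "i x \<noteq> i y" "i x \<in> topspace C" "i y \<in> topspace C"
        using ai continuous_map_image_subset_topspace[OF ci] by (metis, auto)
      then obtain U V where UV: "openin C U" "openin C V" "i x \<in> U" "i y \<in> V" "disjnt U V"
        using H unfolding Hausdorff_space_def by blast
      show "\<exists>U V. openin X U \<and> openin X V \<and> x \<in> U \<and> y \<in> V \<and> disjnt U V"
        apply (rule exI[of _ "{x \<in> topspace X. i x \<in> U}"], rule exI[of _ "{x \<in> topspace X. i x \<in> V}"])
        using openin_continuous_map_preimage[OF ci UV(1)] openin_continuous_map_preimage[OF ci UV(2)]
          UV xy by (auto simp: disjnt_def)
    qed
    ultimately show "Hausdorff_space X \<and> Hausdorff_space (vertex_space C \<alpha> \<beta> base)" by blast
  }
  {
    assume H: "Hausdorff_space X \<and> Hausdorff_space (vertex_space C \<alpha> \<beta> base)"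
    have pull: "\<exists>U V. openin C U \<and> openin C V \<and> c \<in> U \<and> d \<in> V \<and> disjnt U V"
      if f: "continuous_map C X f" and c: "c \<in> topspace C" and d: "d \<in> topspace C"
        and ne: "f c \<noteq> f d" for f c d
    proof -
      have "f c \<in> topspace X" "f d \<in> topspace X"
        using c d continuous_map_image_subset_topspace[OF f] by auto
      then obtain U V where UV: "openin X U" "openin X V" "f c \<in> U" "f d \<in> V" "disjnt U V"
        using H ne unfolding Hausdorff_space_def by blast
      show ?thesis
        apply (rule exI[of _ "{x \<in> topspace C. f x \<in> U}"], rule exI[of _ "{x \<in> topspace C. f x \<in> V}"])
        using openin_continuous_map_preimage[OF f UV(1)] openin_continuous_map_preimage[OF f UV(2)]
          UV c d by (auto simp: disjnt_def)
    qed
    show "Hausdorff_space C"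
      unfolding Hausdorff_space_def
    proof (intro allI impI)
      fix c d assume cd: "c \<in> topspace C \<and> d \<in> topspace C \<and> c \<noteq> d"
      show "\<exists>U V. openin C U \<and> openin C V \<and> c \<in> U \<and> d \<in> V \<and> disjnt U V"
      proof (cases "\<alpha> c = \<alpha> d \<and> \<beta> c = \<beta> d")
        case True
        then show ?thesis using sep_same[OF assms(2,3), of c d] H cd by simp
      next
        case False
        then show ?thesis using pull[OF ca, of c d] pull[OF cb, of c d] cd by auto
      qed
    qed
  }
qed

end
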